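(* Let $D\ge1$, let $F:\mathbb R\to\mathbb R^+$ be strictly decreasing with $A(\alpha):=\int_{\mathbb R^D}F(\frac12|v|^2+\alpha)\,dv<\infty$ for all $\alpha\in\mathbb R$, let $b:=-A^{-1}:(0,\infty)\to\mathbb R$, and let $B\in C^1(0,\infty)$ satisfy $B'=b$, with $\lim_{s\to0^+}B(s)$ existing and $B(0):=\lim_{s\to 0^+}B(s)=0$. Then: (i) $\inf_{s\ge 0}B(s)$ is finite; (ii) $\inf_{s>0}s\,b(s)$ is finite, and for every $s>0$, $s\,b_-(s)\le B_-(s)$.
   Context: Under the assumptions on $F$, $A$ is a continuous strictly decreasing bijection of $\mathbb R$ onto $(0,\infty)$, so $A^{-1}:(0,\infty)\to\mathbb R$ is well defined (and strictly decreasing, so $B$ is strictly convex). For a real number $x$, $x_-:=\max\{-x,0\}$ denotes the negative part. *)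

theory Defs
  imports "HOL-Analysis.Analysis"
begin

definition negpart :: "real \<Rightarrow> real" where
  "negpart x = max (- x) 0"

end

theory Submission
  imports Defs
begin

lemma integral_pos_lborel:
  fixes f :: "'a::euclidean_space \<Rightarrow> real"
  assumes "integrable lborel f" "\<And>x. f x > 0"
  shows "integral\<^sup>L lborel f > 0"
proof -
  have ge: "integral\<^sup>L lborel f \<ge> 0"
    by (intro integral_nonneg_AE) (simp add: assms(2) less_imp_le)
  have "integral\<^sup>L lborel f \<noteq> 0"
  proof
    assume "integral\<^sup>L lborel f = 0"
    then have "AE x in lborel. f x = 0"
      using integral_nonneg_eq_0_iff_AE[OF assms(1)] assms(2) by (simp add: less_imp_le)
    then obtain N where N: "{x\<in>space lborel. \<not> f x = 0} \<subseteq> N" "emeasure lborel N = 0" "N \<in> sets lborel"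
      by (rule AE_E)
    have "UNIV \<subseteq> N" using N(1) assms(2) by (auto simp: less_le)
    then have "emeasure lborel (UNIV::'a set) \<le> emeasure lborel N"
      by (rule emeasure_mono) (use N(3) in auto)
    then show False using N by simp
  qed
  with ge show ?thesis by simp
qed

lemma integrable_const_lborel:
  assumes "integrable (lborel :: ('a::euclidean_space) measure) (\<lambda>x. c::real)"
  shows "c = 0"
proof (rule ccontr)
  assume c: "c \<noteq> 0"
  from assms have "(\<integral>\<^sup>+x. ennreal (norm c) \<partial>(lborel :: 'a measure)) < \<infinity>"
    by (simp only: integrable_iff_bounded)
  moreover have "(\<integral>\<^sup>+x. ennreal (norm c) \<partial>(lborel :: 'a measure)) = ennreal (norm c) * emeasure lborel (space (lborel :: 'a measure))"
    by (rule nn_integral_const)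
  moreover have "emeasure lborel (space (lborel :: 'a measure)) = \<infinity>"
    by simp
  moreover have "ennreal (norm c) \<noteq> 0" using c by simp
  ultimately show False by (metis ennreal_mult_top infinity_ennreal_def less_irrefl)
qed


lemma F_le:
  fixes F :: "real \<Rightarrow> real"
  assumes F_decr: "\<forall>x y. x < y \<longrightarrow> F y < F x" and "x \<le> y"
  shows "F y \<le> F x"
  using assms by (cases "x = y") (auto simp: less_imp_le)

lemma A_cont:
  fixes F :: "real \<Rightarrow> real"
  assumes F_pos: "\<forall>x. F x > 0"
    and F_decr: "\<forall>x y. x < y \<longrightarrow> F y < F x"
    and F_int: "\<forall>\<alpha>. integrable (lborel :: ('a::euclidean_space) measure) (\<lambda>v. F (norm v ^ 2 / 2 + \<alpha>))"
  shows "isCont (\<lambda>\<alpha>. \<integral>v. F (norm v ^ 2 / 2 + \<alpha>) \<partial>(lborel :: 'a measure)) \<alpha>"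
proof -
  have mono: "mono (\<lambda>x. - F x)"
    unfolding mono_def using F_le[OF F_decr] by auto
  have "{c. \<not> isCont F c} \<subseteq> {c. \<not> isCont (\<lambda>x. - F x) c}"
  proof
    fix c assume "c \<in> {c. \<not> isCont F c}"
    then have "\<not> isCont F c" by simp
    moreover have "isCont (\<lambda>x. - F x) c \<Longrightarrow> isCont F c"
      using isCont_minus[of c "\<lambda>x. - F x"] by simp
    ultimately show "c \<in> {c. \<not> isCont (\<lambda>x. - F x) c}" by auto
  qed
  then have ctb: "countable {c. \<not> isCont F c}"
    using mono_ctble_discont[OF mono] countable_subset by blast
  define N where "N = (\<Union>c\<in>{c. \<not> isCont F c}. sphere (0::'a) (sqrt (2*(c - \<alpha>))))"
  have sph: "sphere (0::'a) r \<in> null_sets lborel" for r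
    using negligible_sphere[of "0::'a" r]
    by (auto simp: null_sets_completion_iff negligible_iff_null_sets negligible_convex_frontier)
  have Nnull: "N \<in> null_sets lborel" unfolding N_def
    by (intro null_sets_UN' ctb sph)
  have sub: "{v \<in> space (lborel::'a measure). \<not> isCont F (norm v ^ 2 / 2 + \<alpha>)} \<subseteq> N"
    proof
      fix v :: 'a assume "v \<in> {v \<in> space lborel. \<not> isCont F (norm v ^ 2 / 2 + \<alpha>)}"
      then have nc: "\<not> isCont F (norm v ^ 2 / 2 + \<alpha>)" by simp
      have "sqrt (2 * ((norm v ^ 2 / 2 + \<alpha>) - \<alpha>)) = norm v"
        by simp
      then have "v \<in> sphere (0::'a) (sqrt (2 * ((norm v ^ 2 / 2 + \<alpha>) - \<alpha>)))"
        by simp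
      with nc show "v \<in> N" unfolding N_def by (intro UN_I[of "norm v ^ 2 / 2 + \<alpha>"]) auto
    qed
  have AEc: "AE v in (lborel::'a measure). isCont F (norm v ^ 2 / 2 + \<alpha>)"
    by (rule AE_I'[OF Nnull sub])
  show ?thesis
  proof (rule continuous_at_sequentiallyI)
    fix X :: "nat \<Rightarrow> real" assume X: "X \<longlonglongrightarrow> \<alpha>"
    have "eventually (\<lambda>n. X n > \<alpha> - 1) sequentially"
      using X by (rule order_tendstoD) simp
    then obtain M where M: "\<And>n. n \<ge> M \<Longrightarrow> X n > \<alpha> - 1"
      by (auto simp: eventually_sequentially)
    have "(\<lambda>n. \<integral>v. F (norm v ^ 2 / 2 + X (n + M)) \<partial>(lborel :: 'a measure))
           \<longlonglongrightarrow> (\<integral>v. F (norm v ^ 2 / 2 + \<alpha>) \<partial>(lborel :: 'a measure))"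
    proof (rule integral_dominated_convergence[where w = "\<lambda>v. F (norm v ^ 2 / 2 + (\<alpha> - 1))"])
      show "(\<lambda>v::'a. F (norm v ^ 2 / 2 + \<alpha>)) \<in> borel_measurable lborel"
        using borel_measurable_integrable[OF F_int[rule_format, of \<alpha>]] .
      show "(\<lambda>v::'a. F (norm v ^ 2 / 2 + X (n + M))) \<in> borel_measurable lborel" for n
        using borel_measurable_integrable[OF F_int[rule_format, of "X (n + M)"]] .
      show "integrable lborel (\<lambda>v. F (norm (v::'a) ^ 2 / 2 + (\<alpha> - 1)))"
        using F_int[rule_format, of "\<alpha> - 1"] .
      show "AE v in (lborel::'a measure). (\<lambda>n. F (norm v ^ 2 / 2 + X (n + M))) \<longlonglongrightarrow> F (norm v ^ 2 / 2 + \<alpha>)"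
        using AEc
      proof eventually_elim
        fix v :: 'a assume c: "isCont F (norm v ^ 2 / 2 + \<alpha>)"
        have "(\<lambda>n. X (n + M)) \<longlonglongrightarrow> \<alpha>" using X by (rule LIMSEQ_ignore_initial_segment)
        then have "(\<lambda>n. norm v ^ 2 / 2 + X (n + M)) \<longlonglongrightarrow> norm v ^ 2 / 2 + \<alpha>"
          by (intro tendsto_add tendsto_const)
        then show "(\<lambda>n. F (norm v ^ 2 / 2 + X (n + M))) \<longlonglongrightarrow> F (norm v ^ 2 / 2 + \<alpha>)"
          by (rule isCont_tendsto_compose[OF c])
      qed
      show "AE v in (lborel::'a measure). norm (F (norm v ^ 2 / 2 + X (n + M))) \<le> F (norm v ^ 2 / 2 + (\<alpha> - 1))" for n
      proof (rule AE_I2)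
        fix v :: 'a
        have "F (norm v ^ 2 / 2 + X (n + M)) \<le> F (norm v ^ 2 / 2 + (\<alpha> - 1))"
          using M[of "n + M"] by (intro F_le[OF F_decr]) auto
        then show "norm (F (norm v ^ 2 / 2 + X (n + M))) \<le> F (norm v ^ 2 / 2 + (\<alpha> - 1))"
          using F_pos by (simp add: less_imp_le)
      qed
    qed
    then show "(\<lambda>n. \<integral>v. F (norm v ^ 2 / 2 + X n) \<partial>(lborel :: 'a measure))
           \<longlonglongrightarrow> (\<integral>v. F (norm v ^ 2 / 2 + \<alpha>) \<partial>(lborel :: 'a measure))"
      by (rule LIMSEQ_offset)
  qed
qed


lemma A_small:
  fixes F :: "real \<Rightarrow> real"
  assumes F_pos: "\<forall>x. F x > 0"
    and F_decr: "\<forall>x y. x < y \<longrightarrow> F y < F x"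
    and F_int: "\<forall>\<alpha>. integrable (lborel :: ('a::euclidean_space) measure) (\<lambda>v. F (norm v ^ 2 / 2 + \<alpha>))"
    and s: "s > 0"
  shows "\<exists>\<alpha>. (\<integral>v. F (norm v ^ 2 / 2 + \<alpha>) \<partial>(lborel :: 'a measure)) < s"
proof -
  define c where "c = Inf (range F)"
  have bdd: "bdd_below (range F)"
    using F_pos by (intro bdd_belowI[where m=0]) (auto simp: less_imp_le)
  have lim: "(\<lambda>n. F (y + real n)) \<longlonglongrightarrow> c" for y
  proof (rule order_tendstoI)
    fix a assume "a < c"
    have "c \<le> F (y + real n)" for n unfolding c_def by (rule cInf_lower[OF _ bdd]) simp
    then show "eventually (\<lambda>n. a < F (y + real n)) sequentially"
      using \<open>a < c\<close> by (auto intro!: always_eventually less_le_trans[OF \<open>a < c\<close>])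
  next
    fix a assume "c < a"
    then obtain z where z: "F z < a"
      unfolding c_def using cInf_lessD[of "range F" a] by auto
    have "F (y + real n) < a" if "n \<ge> nat \<lceil>z - y\<rceil>" for n
    proof -
      have "z \<le> y + real n" using that by linarith
      then have "F (y + real n) \<le> F z" by (rule F_le[OF F_decr])
      then show ?thesis using z by simp
    qed
    then show "eventually (\<lambda>n. F (y + real n) < a) sequentially"
      unfolding eventually_sequentially by blast
  qed
  have conv: "(\<lambda>n. \<integral>v. F (norm v ^ 2 / 2 + real n) \<partial>(lborel :: 'a measure)) \<longlonglongrightarrow> (\<integral>v. c \<partial>(lborel :: 'a measure))"
   and intc: "integrable (lborel :: 'a measure) (\<lambda>v. c)"
  proof -
    have a1: "(\<lambda>v::'a. c) \<in> borel_measurable lborel" by simp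
    have a2: "(\<lambda>v::'a. F (norm v ^ 2 / 2 + real n)) \<in> borel_measurable lborel" for n
      using borel_measurable_integrable[OF F_int[rule_format, of "real n"]] .
    have a3: "integrable lborel (\<lambda>v::'a. F (norm v ^ 2 / 2 + 0))"
      using F_int[rule_format, of 0] .
    have a4: "AE v in (lborel::'a measure). (\<lambda>n. F (norm v ^ 2 / 2 + real n)) \<longlonglongrightarrow> c"
      by (rule AE_I2) (rule lim)
    have a5: "AE v in (lborel::'a measure). norm (F (norm v ^ 2 / 2 + real n)) \<le> F (norm v ^ 2 / 2 + 0)" for n
    proof (rule AE_I2)
      fix v :: 'a
      have "F (norm v ^ 2 / 2 + real n) \<le> F (norm v ^ 2 / 2 + 0)"
        by (intro F_le[OF F_decr]) auto
      then show "norm (F (norm v ^ 2 / 2 + real n)) \<le> F (norm v ^ 2 / 2 + 0)"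
        using F_pos by (simp add: less_imp_le)
    qed
    show "(\<lambda>n. \<integral>v. F (norm v ^ 2 / 2 + real n) \<partial>(lborel :: 'a measure)) \<longlonglongrightarrow> (\<integral>v. c \<partial>(lborel :: 'a measure))"
      by (rule integral_dominated_convergence[OF a1 a2 a3 a4 a5])
    show "integrable (lborel :: 'a measure) (\<lambda>v. c)"
      by (rule integrable_dominated_convergence[OF a1 a2 a3 a4 a5])
  qed
  have "c = 0" by (rule integrable_const_lborel[OF intc])
  then have "(\<lambda>n. \<integral>v. F (norm v ^ 2 / 2 + real n) \<partial>(lborel :: 'a measure)) \<longlonglongrightarrow> 0"
    using conv by simp
  then have "eventually (\<lambda>n. (\<integral>v. F (norm v ^ 2 / 2 + real n) \<partial>(lborel :: 'a measure)) < s) sequentially"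
    using s by (rule order_tendstoD)
  then obtain n where "(\<integral>v. F (norm v ^ 2 / 2 + real n) \<partial>(lborel :: 'a measure)) < s"
    by (auto simp: eventually_sequentially)
  then show ?thesis by blast
qed

lemma A_big:
  fixes F :: "real \<Rightarrow> real"
  assumes F_pos: "\<forall>x. F x > 0"
    and F_decr: "\<forall>x y. x < y \<longrightarrow> F y < F x"
    and F_int: "\<forall>\<alpha>. integrable (lborel :: ('a::euclidean_space) measure) (\<lambda>v. F (norm v ^ 2 / 2 + \<alpha>))"
  shows "\<exists>\<alpha>. (\<integral>v. F (norm v ^ 2 / 2 + \<alpha>) \<partial>(lborel :: 'a measure)) > s"
proof -
  define V where "V = unit_ball_vol (real DIM('a))"
  have V: "V > 0" unfolding V_def by simp
  have F0: "F 0 > 0" using F_pos by simp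
  define r where "r = \<bar>s\<bar> / (F 0 * V) + 1"
  have r1: "r \<ge> 1" unfolding r_def using V F0 by simp
  have "r ^ DIM('a) \<ge> r ^ 1"
    using r1 by (intro power_increasing) (auto simp: Suc_leI)
  then have rD: "r ^ DIM('a) \<ge> r" by simp
  have "F 0 * V * r = \<bar>s\<bar> + F 0 * V" unfolding r_def using V F0 by (simp add: field_simps)
  then have gt: "F 0 * V * r > s" using V F0 by (smt (verit) mult_pos_pos)
  have meas: "emeasure lborel (cball (0::'a) r) = ennreal (V * r ^ DIM('a))"
    unfolding V_def using r1 by (intro emeasure_cball) simp
  define q where "q = - (r ^ 2) / 2"
  have fin: "emeasure lborel (cball (0::'a) r) < \<infinity>" using meas by simp
  have intI: "integrable lborel (indicator (cball (0::'a) r) :: 'a \<Rightarrow> real)"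
    using fin by (intro integrable_real_indicator) auto
  have "(\<integral>v. F 0 * indicator (cball (0::'a) r) v \<partial>lborel) \<le> (\<integral>v. F (norm v ^ 2 / 2 + q) \<partial>(lborel :: 'a measure))"
  proof (rule integral_mono)
    show "integrable lborel (\<lambda>v::'a. F 0 * indicator (cball (0::'a) r) v)"
      using intI by (rule integrable_mult_right)
    show "integrable lborel (\<lambda>v::'a. F (norm v ^ 2 / 2 + q))"
      using F_int[rule_format, of q] .
    fix v :: 'a
    show "F 0 * indicator (cball 0 r) v \<le> F (norm v ^ 2 / 2 + q)"
    proof (cases "v \<in> cball 0 r")
      case True
      then have "norm v \<le> r" by simp
      then have "norm v ^ 2 \<le> r ^ 2" by (intro power_mono) auto
      then have "F 0 \<le> F (norm v ^ 2 / 2 + q)"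
        unfolding q_def by (intro F_le[OF F_decr]) simp
      then show ?thesis using True by simp
    next
      case False
      then show ?thesis using F_pos by (simp add: less_imp_le)
    qed
  qed
  moreover have "(\<integral>v. F 0 * indicator (cball (0::'a) r) v \<partial>lborel) = F 0 * (V * r ^ DIM('a))"
  proof -
    have "(\<integral>v. F 0 * indicator (cball (0::'a) r) v \<partial>lborel) = F 0 * measure lborel (cball (0::'a) r)"
      by simp
    also have "measure lborel (cball (0::'a) r) = V * r ^ DIM('a)"
      unfolding measure_def meas using V r1 by simp
    finally show ?thesis .
  qed
  moreover have "F 0 * (V * r ^ DIM('a)) \<ge> F 0 * V * r"
    using rD V F0 by simp
  ultimately show ?thesis using gt by (intro exI[of _ q]) linarith
qed


theorem mainTheorem2:
  fixes F :: "real \<Rightarrow> real"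
    and A :: "real \<Rightarrow> real"
    and b :: "real \<Rightarrow> real"
    and B :: "real \<Rightarrow> real"
  assumes F_pos: "\<forall>x. F x > 0"
    and F_decr: "\<forall>x y. x < y \<longrightarrow> F y < F x"
    and F_int: "\<forall>\<alpha>. integrable (lborel :: ('a::euclidean_space) measure) (\<lambda>v. F (norm v ^ 2 / 2 + \<alpha>))"
    and A_def: "\<forall>\<alpha>. A \<alpha> = (\<integral>v. F (norm v ^ 2 / 2 + \<alpha>) \<partial>(lborel :: 'a measure))"
    and b_def: "\<forall>s>0. b s = - (THE \<alpha>. A \<alpha> = s)"
    and B_deriv: "\<forall>s>0. (B has_real_derivative b s) (at s)"
    and B'_cont: "continuous_on {0<..} b"
    and B_lim: "(B \<longlongrightarrow> 0) (at_right 0)"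
    and B0: "B 0 = 0"
  shows "bdd_below (B ` {0..}) \<and>
         bdd_below ((\<lambda>s. s * b s) ` {0<..}) \<and>
         (\<forall>s>0. s * negpart (b s) \<le> negpart (B s))"
proof -
  have AA: "A = (\<lambda>\<alpha>. \<integral>v. F (norm v ^ 2 / 2 + \<alpha>) \<partial>(lborel :: 'a measure))"
    using A_def by (intro ext) simp
  have Apos: "A \<gamma> > 0" for \<gamma>
    unfolding AA by (rule integral_pos_lborel[OF F_int[rule_format]]) (use F_pos in simp)
  have Astrict: "A \<beta> < A \<alpha>" if "\<alpha> < \<beta>" for \<alpha> \<beta>
  proof -
    have "A \<alpha> - A \<beta> = (\<integral>v. F (norm v ^ 2 / 2 + \<alpha>) - F (norm v ^ 2 / 2 + \<beta>) \<partial>(lborel :: 'a measure))"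
      unfolding AA by (rule Bochner_Integration.integral_diff[symmetric, OF F_int[rule_format] F_int[rule_format]])
    also have "\<dots> > 0"
    proof (rule integral_pos_lborel)
      show "integrable lborel (\<lambda>v::'a. F (norm v ^ 2 / 2 + \<alpha>) - F (norm v ^ 2 / 2 + \<beta>))"
        by (rule Bochner_Integration.integrable_diff[OF F_int[rule_format] F_int[rule_format]])
      show "F (norm v ^ 2 / 2 + \<alpha>) - F (norm v ^ 2 / 2 + \<beta>) > 0" for v :: 'a
        using F_decr that by simp
    qed
    finally show ?thesis by simp
  qed
  have Ainj: "\<alpha> = \<beta>" if "A \<alpha> = A \<beta>" for \<alpha> \<beta>
    using Astrict[of \<alpha> \<beta>] Astrict[of \<beta> \<alpha>] that by (cases \<alpha> \<beta> rule: linorder_cases) auto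
  have the: "(THE \<alpha>. A \<alpha> = A \<gamma>) = \<gamma>" for \<gamma>
    by (rule the_equality) (auto dest: Ainj)
  have bA: "b (A \<gamma>) = - \<gamma>" for \<gamma>
    using b_def Apos[of \<gamma>] the[of \<gamma>] by simp
  have Acont: "continuous_on S A" for S
    unfolding AA by (intro continuous_at_imp_continuous_on ballI A_cont[OF F_pos F_decr F_int])
  have surj: "\<exists>\<alpha>. A \<alpha> = s" if s_pos: "s > 0" for s
  proof -
    obtain \<alpha>1 where a1: "A \<alpha>1 > s"
      using A_big[OF F_pos F_decr F_int, of s] unfolding AA by blast
    obtain \<alpha>2 where a2: "A \<alpha>2 < s"
      using A_small[OF F_pos F_decr F_int s_pos] unfolding AA by blast
    have le: "\<alpha>1 \<le> \<alpha>2"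
    proof (rule ccontr)
      assume "\<not> \<alpha>1 \<le> \<alpha>2"
      then have "A \<alpha>1 < A \<alpha>2" by (intro Astrict) simp
      then show False using a1 a2 by simp
    qed
    show ?thesis
      using IVT2'[of A \<alpha>2 s \<alpha>1, OF _ _ le Acont] a1 a2 by auto
  qed
  have bmono: "b s \<le> b t" if st: "0 < s" "s \<le> t" for s t
  proof -
    obtain \<alpha> where \<alpha>: "A \<alpha> = s" using surj[OF st(1)] by blast
    obtain \<beta> where \<beta>: "A \<beta> = t" using surj[of t] st by auto
    have "\<beta> \<le> \<alpha>"
    proof (rule ccontr)
      assume "\<not> \<beta> \<le> \<alpha>"
      then have "A \<beta> < A \<alpha>" by (intro Astrict) simp
      then show False using \<alpha> \<beta> st by simp
    qed
    then show ?thesis using bA[of \<alpha>] bA[of \<beta>] \<alpha> \<beta> by simp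
  qed
  have Bcont: "continuous_on {0..x} B" if "0 < x" for x
    unfolding continuous_on_eq_continuous_within
  proof
    fix y assume y: "y \<in> {0..x}"
    show "continuous (at y within {0..x}) B"
    proof (cases "y = 0")
      case True
      have "(B \<longlongrightarrow> B 0) (at 0 within {0..x})"
        using B_lim B0 at_within_Icc_at_right[OF that] by simp
      then show ?thesis using True by (simp add: continuous_within)
    next
      case False
      then have "y > 0" using y by simp
      then have "isCont B y" using B_deriv by (blast intro: DERIV_isCont)
      then show ?thesis by (rule continuous_at_imp_continuous_within)
    qed
  qed
  have key: "B s \<le> s * b s" if s: "0 < s" for s
  proof -
    have "(\<lambda>t. B t - t * b s) s \<le> (\<lambda>t. B t - t * b s) 0"
    proof (rule DERIV_nonpos_imp_decreasing_open[of 0 s "\<lambda>t. B t - t * b s"])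
      show "0 \<le> s" using s by simp
    next
      fix x assume x: "0 < x" "x < s"
      have "((\<lambda>t. B t - t * b s) has_real_derivative (b x - 1 * b s)) (at x)"
      proof (rule DERIV_diff)
        show "(B has_real_derivative b x) (at x)" using B_deriv x by simp
        show "((\<lambda>t. t * b s) has_real_derivative 1 * b s) (at x)"
          by (intro DERIV_cmult_right DERIV_ident)
      qed
      moreover have "b x - 1 * b s \<le> 0" using bmono[of x s] x by simp
      ultimately show "\<exists>y. ((\<lambda>t. B t - t * b s) has_real_derivative y) (at x) \<and> y \<le> 0" by blast
    next
      show "continuous_on {0..s} (\<lambda>t. B t - t * b s)"
        by (intro continuous_intros Bcont s)
    qed
    then show ?thesis using B0 by simp
  qed
  define s0 where "s0 = A 0"
  have s0: "s0 > 0" "b s0 = 0" unfolding s0_def using Apos bA[of 0] by auto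
  have Blow: "B s0 \<le> B s" if "0 \<le> s" for s
  proof (cases "s \<le> s0")
    case True
    show ?thesis
    proof (rule DERIV_nonpos_imp_decreasing_open[OF True])
      fix x assume x: "s < x" "x < s0"
      then have "x > 0" using that by simp
      then show "\<exists>y. (B has_real_derivative y) (at x) \<and> y \<le> 0"
        using B_deriv[rule_format, OF \<open>x > 0\<close>] bmono[of x s0] x s0 by auto
    next
      show "continuous_on {s..s0} B"
        by (rule continuous_on_subset[OF Bcont[OF s0(1)]]) (use that in auto)
    qed
  next
    case False
    then have F': "s0 \<le> s" by simp
    show ?thesis
    proof (rule DERIV_nonneg_imp_increasing_open[OF F'])
      fix x assume x: "s0 < x" "x < s"
      then have "x > 0" using s0 by simp
      then show "\<exists>y. (B has_real_derivative y) (at x) \<and> y \<ge> 0"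
        using B_deriv[rule_format, OF \<open>x > 0\<close>] bmono[of s0 x] x s0 by auto
    next
      have "0 < s" using F' s0 by simp
      show "continuous_on {s0..s} B"
        by (rule continuous_on_subset[OF Bcont[OF \<open>0 < s\<close>]]) (use s0 in auto)
    qed
  qed
  have c1: "bdd_below (B ` {0..})"
    using Blow by (intro bdd_belowI2[where m="B s0"]) simp
  have c2: "bdd_below ((\<lambda>s. s * b s) ` {0<..})"
  proof (intro bdd_belowI2[where m="B s0"])
    fix s :: real assume "s \<in> {0<..}"
    then have "0 < s" by simp
    then show "B s0 \<le> s * b s" using key[of s] Blow[of s] by simp
  qed
  have c3: "s * negpart (b s) \<le> negpart (B s)" if s: "s > 0" for s
  proof (cases "b s \<ge> 0")
    case True
    then show ?thesis unfolding negpart_def by simp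
  next
    case False
    then have "s * negpart (b s) = - (s * b s)" unfolding negpart_def by simp
    also have "\<dots> \<le> - B s" using key[OF s] by simp
    also have "\<dots> \<le> negpart (B s)" unfolding negpart_def by simp
    finally show ?thesis .
  qed
  show ?thesis using c1 c2 c3 by blast
qed

end
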